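(* Let $n\ge1$ and $\rho\in S_{n+1}$. Then $\ell_L(\rho)=\ell_L(s_1\rho)$.
   Context: $B_m$ is the group of bijections $\sigma$ of $\{\pm1,\dots,\pm m\}$ with $\sigma(-i)=-\sigma(i)$, written in window notation $[\sigma(1),\dots,\sigma(m)]$, with product $(\sigma\tau)(i)=\sigma(\tau(i))$; $S_m\subseteq B_m$ consists of elements with all $\sigma(i)>0$. The Coxeter generators of $B_m$ are $s_0=[-1,2,\dots,m]$ and $s_i=$ the transposition of $i$ and $i+1$ ($1\le i\le m-1$); $\ell_B(\sigma)$ is the length with respect to $\{s_0,\dots,s_{m-1}\}$. $\mathrm{del}_B(\sigma)=\#\{2\le j\le m:\sigma(i)>\sigma(j)\text{ for all }1\le i<j\}$, and $\ell_L(\sigma)=\ell_B(\sigma)-\mathrm{del}_B(\sigma)$. *)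

theory Defs
  imports Main
begin

text \<open>The product is function composition: (sigma tau)(i) = sigma(tau(i)).\<close>

definition signed_perms :: "nat \<Rightarrow> (int \<Rightarrow> int) set" where
  "signed_perms m = {\<sigma>. bij_betw \<sigma> ({-int m..-1} \<union> {1..int m}) ({-int m..-1} \<union> {1..int m})
              \<and> (\<forall>i. \<sigma> (-i) = - \<sigma> i)
              \<and> (\<forall>i. i \<notin> {-int m..-1} \<union> {1..int m} \<longrightarrow> \<sigma> i = i)}"

definition unsigned_perms :: "nat \<Rightarrow> (int \<Rightarrow> int) set" where
  "unsigned_perms m = {\<sigma> \<in> signed_perms m. \<forall>i\<in>{1..int m}. \<sigma> i > 0}"

definition cox_gen :: "nat \<Rightarrow> int \<Rightarrow> int" where
  "cox_gen k = (if k = 0 then (\<lambda>x. if x = 1 then -1 else if x = -1 then 1 else x)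
                else (\<lambda>x. if x = int k then int k + 1 else if x = int k + 1 then int k
                          else if x = - int k then - int k - 1 else if x = - int k - 1 then - int k
                          else x))"

definition length_B :: "nat \<Rightarrow> (int \<Rightarrow> int) \<Rightarrow> nat" where
  "length_B m \<sigma> = (LEAST k. \<exists>ws. length ws = k \<and> set ws \<subseteq> {0..<m}
                        \<and> foldr (\<circ>) (map cox_gen ws) id = \<sigma>)"

definition del_B :: "nat \<Rightarrow> (int \<Rightarrow> int) \<Rightarrow> nat" where
  "del_B m \<sigma> = card {j \<in> {2..int m}. \<forall>i\<in>{1..<j}. \<sigma> i > \<sigma> j}"

definition length_L :: "nat \<Rightarrow> (int \<Rightarrow> int) \<Rightarrow> int" where
  "length_L m \<sigma> = int (length_B m \<sigma>) - int (del_B m \<sigma>)"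

end

theory Submission
  imports Defs
begin

lemma cg_invol: "cox_gen k (cox_gen k x) = x"
  unfolding cox_gen_def by auto

lemma cg_odd: "cox_gen k (- x) = - cox_gen k x"
  unfolding cox_gen_def by auto

lemma cg_comp_invol: "cox_gen k \<circ> (cox_gen k \<circ> f) = f"
  by (auto simp: cg_invol)

lemma cg_inj: "inj (cox_gen k)"
  by (metis cg_invol injI)

lemma cg_order_bad:
  assumes "a < b" "cox_gen k a > cox_gen k b"
  shows "(k \<ge> 1 \<and> a = int k \<and> b = int k + 1) \<or> (k \<ge> 1 \<and> a = - int k - 1 \<and> b = - int k)
         \<or> (k = 0 \<and> ((a = -1 \<and> b = 1) \<or> (a = -1 \<and> b = 0) \<or> (a = 0 \<and> b = 1)))"
  using assms unfolding cox_gen_def by (auto split: if_splits)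

lemma cg_order_pos:
  assumes "k \<ge> 1" "a > 0" "b > 0" "\<not>(a = int k \<and> b = int k + 1)" "\<not>(a = int k + 1 \<and> b = int k)"
  shows "cox_gen k a > cox_gen k b \<longleftrightarrow> a > b"
  using assms unfolding cox_gen_def by (auto split: if_splits)

definition Pp :: "(int \<Rightarrow> int) \<Rightarrow> bool" where
  "Pp t = (inj t \<and> (\<forall>i. t (-i) = - t i))"

lemma Pp_id: "Pp id" by (simp add: Pp_def)

lemma Pp_comp: "Pp t \<Longrightarrow> Pp (cox_gen k \<circ> t)"
  unfolding Pp_def using cg_inj cg_odd by (auto simp: inj_compose)

lemma Pp_nz:
  assumes P: "Pp t" and i: "i \<noteq> 0" shows "t i \<noteq> 0"
proof
  assume z: "t i = 0"
  have e: "t (-i) = t i" using P z unfolding Pp_def by simp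
  have "inj t" using P unfolding Pp_def by blast
  then have "-i = i" using e by (rule injD)
  then show False using i by simp
qed

definition Inv :: "nat \<Rightarrow> (int \<Rightarrow> int) \<Rightarrow> (int \<times> int) set" where
  "Inv m t = {(i,j). 1 \<le> i \<and> i < j \<and> j \<le> int m \<and> t i > t j}"

lemma Inv_sub: "Inv m t \<subseteq> {1..int m} \<times> {1..int m}"
  unfolding Inv_def by auto

lemma Inv_fin: "finite (Inv m t)"
  using Inv_sub finite_subset by blast

lemma Inv_step:
  assumes "Pp t"
  shows "card (Inv m (cox_gen k \<circ> t)) \<le> card (Inv m t) + 1"
proof -
  define E where "E = {(i,j). 1 \<le> i \<and> i < j \<and> j \<le> int m \<and> t i < t j \<and> cox_gen k (t i) > cox_gen k (t j)}"
  have inj: "inj t" and odd: "\<And>i. t (-i) = - t i" using assms by (auto simp: Pp_def)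
  have sub: "Inv m (cox_gen k \<circ> t) \<subseteq> Inv m t \<union> E"
  proof
    fix x assume x: "x \<in> Inv m (cox_gen k \<circ> t)"
    obtain i j where xij: "x = (i,j)" by force
    have "t i \<noteq> t j" using x xij inj unfolding Inv_def by (auto dest: injD)
    then show "x \<in> Inv m t \<union> E" using x xij unfolding Inv_def E_def by auto
  qed
  have finE: "finite E"
    by (rule finite_subset[of _ "{1..int m} \<times> {1..int m}"]) (auto simp: E_def)
  have Ecl: "(t i = int k \<and> t j = int k + 1) \<or> (t i = - int k - 1 \<and> t j = - int k)"
    if "(i,j) \<in> E" for i j
  proof -
    have ij: "1 \<le> i" "i < j" "t i < t j" "cox_gen k (t i) > cox_gen k (t j)" using that by (auto simp: E_def)
    have nz: "t i \<noteq> 0" "t j \<noteq> 0" using Pp_nz[OF assms] ij by auto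
    have no: "\<not> (t i = -1 \<and> t j = 1)"
    proof
      assume "t i = -1 \<and> t j = 1"
      then have "t (-j) = t i" using odd by simp
      then have "-j = i" using inj by (auto dest: injD)
      then show False using ij by simp
    qed
    show ?thesis using cg_order_bad[OF ij(3) ij(4)] nz no by auto
  qed
  have "card E \<le> Suc 0"
  proof (subst card_le_Suc0_iff_eq[OF finE], intro ballI)
    fix x y assume x: "x \<in> E" and y: "y \<in> E"
    obtain i j i' j' where xy: "x = (i,j)" "y = (i',j')" by force
    have pos: "1 \<le> i" "1 \<le> j" "1 \<le> i'" "1 \<le> j'" using x y xy by (auto simp: E_def)
    have A: "t i = int k \<and> t j = int k + 1 \<or> t i = - int k - 1 \<and> t j = - int k" using Ecl x xy by auto
    have B: "t i' = int k \<and> t j' = int k + 1 \<or> t i' = - int k - 1 \<and> t j' = - int k" using Ecl y xy by auto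
    have eqv: "\<And>a b. t a = t b \<Longrightarrow> a = b" using inj by (auto dest: injD)
    have neg: "\<And>a b. t a = - t b \<Longrightarrow> a = - b" using odd eqv by (metis)
    show "x = y"
    proof (cases "t i = int k \<and> t j = int k + 1")
      case True
      show ?thesis
      proof (cases "t i' = int k \<and> t j' = int k + 1")
        case True
        then show ?thesis using \<open>t i = int k \<and> t j = int k + 1\<close> eqv xy by metis
      next
        case False
        then have "t j' = - t i" using B True by auto
        then have "j' = - i" using neg by blast
        then show ?thesis using pos by simp
      qed
    next
      case False
      then have F: "t i = - int k - 1 \<and> t j = - int k" using A by auto
      show ?thesis
      proof (cases "t i' = int k \<and> t j' = int k + 1")
        case True
        then have "t j = - t i'" using F by auto
        then have "j = - i'" using neg by blast
        then show ?thesis using pos by simp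
      next
        case False
        then show ?thesis using F B eqv xy by metis
      qed
    qed
  qed
  have "card (Inv m (cox_gen k \<circ> t)) \<le> card (Inv m t \<union> E)"
    using sub Inv_fin finE by (intro card_mono) auto
  also have "\<dots> \<le> card (Inv m t) + card E" by (rule card_Un_le)
  finally show ?thesis using \<open>card E \<le> Suc 0\<close> by simp
qed

abbreviation wprod :: "nat list \<Rightarrow> int \<Rightarrow> int" where
  "wprod ws \<equiv> foldr (\<circ>) (map cox_gen ws) id"

lemma lower_word: "Pp (wprod ws) \<and> card (Inv m (wprod ws)) \<le> length ws"
proof (induction ws)
  case Nil
  have "Inv m (\<lambda>a. a) = {}" by (auto simp: Inv_def)
  then show ?case using Pp_id by (simp add: id_def)
next
  case (Cons k ws)
  have eq: "wprod (k#ws) = cox_gen k \<circ> wprod ws" by simp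
  have pp: "Pp (wprod ws)" and c2: "card (Inv m (wprod ws)) \<le> length ws" using Cons by blast+
  have p2: "Pp (cox_gen k \<circ> wprod ws)" using Pp_comp pp by blast
  have c1: "card (Inv m (cox_gen k \<circ> wprod ws)) \<le> card (Inv m (wprod ws)) + 1"
    using Inv_step pp by blast
  have c3: "card (Inv m (cox_gen k \<circ> wprod ws)) \<le> Suc (length ws)" using c1 c2 by linarith
  show ?case unfolding eq length_Cons using p2 c3 by blast
qed

definition Qp :: "nat \<Rightarrow> (int \<Rightarrow> int) \<Rightarrow> bool" where
  "Qp m s = (s ` {1..int m} = {1..int m} \<and> inj_on s {1..int m} \<and> (\<forall>i. s (-i) = - s i)
     \<and> (\<forall>i. i \<notin> {-int m..-1} \<union> {1..int m} \<longrightarrow> s i = i))"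

lemma unsigned_Qp:
  assumes "s \<in> unsigned_perms m"
  shows "Qp m s"
proof -
  let ?S = "{-int m..-1} \<union> {1..int m}"
  have b: "bij_betw s ?S ?S" and odd: "\<forall>i. s (-i) = - s i" and fx: "\<forall>i. i \<notin> ?S \<longrightarrow> s i = i"
    and pos: "\<forall>i\<in>{1..int m}. s i > 0"
    using assms by (auto simp: unsigned_perms_def signed_perms_def)
  have inj: "inj_on s {1..int m}" using b bij_betw_imp_inj_on inj_on_subset by blast
  have im1: "s ` {1..int m} \<subseteq> {1..int m}"
  proof
    fix y assume "y \<in> s ` {1..int m}"
    then obtain i where i: "i \<in> {1..int m}" "y = s i" by auto
    have "s i \<in> ?S" using b i bij_betwE by blast
    moreover have "s i > 0" using pos i by auto
    ultimately show "y \<in> {1..int m}" using i by auto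
  qed
  have im2: "{1..int m} \<subseteq> s ` {1..int m}"
  proof
    fix w assume w: "w \<in> {1..int m}"
    then have "w \<in> s ` ?S" using b bij_betw_imp_surj_on by blast
    then obtain l where l: "l \<in> ?S" "w = s l" by (metis imageE)
    show "w \<in> s ` {1..int m}"
    proof (cases "l > 0")
      case True then show ?thesis using l by auto
    next
      case False
      then have "-l \<in> {1..int m}" using l by auto
      then have "s (-l) > 0" using pos by auto
      then have "s l < 0" using odd by (metis neg_0_less_iff_less minus_minus)
      then show ?thesis using w l by auto
    qed
  qed
  show ?thesis unfolding Qp_def using im1 im2 inj odd fx by blast
qed

lemma cg_image:
  assumes "1 \<le> k" "k < m"
  shows "cox_gen k ` {1..int m} = {1..int m}" and "\<forall>i. i \<notin> {-int m..-1} \<union> {1..int m} \<longrightarrow> cox_gen k i = i"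
proof -
  have A': "cox_gen k ` {1..int m} \<subseteq> {1..int m}"
    using assms unfolding cox_gen_def by auto
  moreover have "{1..int m} \<subseteq> cox_gen k ` {1..int m}"
  proof
    fix x assume "x \<in> {1..int m}"
    then show "x \<in> cox_gen k ` {1..int m}" using A' cg_invol by (metis image_eqI image_subset_iff)
  qed
  ultimately show "cox_gen k ` {1..int m} = {1..int m}" by blast
  show "\<forall>i. i \<notin> {-int m..-1} \<union> {1..int m} \<longrightarrow> cox_gen k i = i"
    using assms unfolding cox_gen_def by auto
qed

lemma Qp_comp:
  assumes "Qp m s" "1 \<le> k" "k < m"
  shows "Qp m (cox_gen k \<circ> s)"
proof -
  have a: "s ` {1..int m} = {1..int m}" "inj_on s {1..int m}" "\<forall>i. s (-i) = - s i"
     "\<forall>i. i \<notin> {-int m..-1} \<union> {1..int m} \<longrightarrow> s i = i" using assms(1) by (auto simp: Qp_def)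
  note c = cg_image[OF assms(2,3)]
  have "(cox_gen k \<circ> s) ` {1..int m} = {1..int m}" by (metis a(1) c(1) image_comp)
  moreover have "inj_on (cox_gen k \<circ> s) {1..int m}"
    by (rule comp_inj_on[OF a(2)]) (metis cg_inj inj_on_subset subset_UNIV)
  moreover have "\<forall>i. (cox_gen k \<circ> s) (-i) = - (cox_gen k \<circ> s) i" using a(3) cg_odd by simp
  moreover have "\<forall>i. i \<notin> {-int m..-1} \<union> {1..int m} \<longrightarrow> (cox_gen k \<circ> s) i = i" using a(4) c(2) by simp
  ultimately show ?thesis unfolding Qp_def by blast
qed

lemma Qp_facts:
  assumes "Qp m s"
  shows "\<And>i. i \<in> {1..int m} \<Longrightarrow> s i \<in> {1..int m}"
    and "\<And>w. w \<in> {1..int m} \<Longrightarrow> \<exists>l\<in>{1..int m}. s l = w"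
    and "\<And>i j. i \<in> {1..int m} \<Longrightarrow> j \<in> {1..int m} \<Longrightarrow> s i = s j \<Longrightarrow> i = j"
    and "\<And>i. s (-i) = - s i"
    and "\<And>i. i \<notin> {-int m..-1} \<union> {1..int m} \<Longrightarrow> s i = i"
proof -
  have a: "s ` {1..int m} = {1..int m}" "inj_on s {1..int m}" "\<forall>i. s (-i) = - s i"
     "\<forall>i. i \<notin> {-int m..-1} \<union> {1..int m} \<longrightarrow> s i = i" using assms(1) unfolding Qp_def by blast+
  show "\<And>i. i \<in> {1..int m} \<Longrightarrow> s i \<in> {1..int m}" using a(1) by blast
  show "\<And>w. w \<in> {1..int m} \<Longrightarrow> \<exists>l\<in>{1..int m}. s l = w" using a(1) by (metis imageE)
  show "\<And>i j. i \<in> {1..int m} \<Longrightarrow> j \<in> {1..int m} \<Longrightarrow> s i = s j \<Longrightarrow> i = j"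
    using a(2) inj_onD by metis
  show "\<And>i. s (-i) = - s i" using a(3) by blast
  show "\<And>i. i \<notin> {-int m..-1} \<union> {1..int m} \<Longrightarrow> s i = i" using a(4) by blast
qed

lemma Qp_id:
  assumes "Qp m s" "Inv m s = {}"
  shows "s = id"
proof -
  note F = Qp_facts[OF assms(1)]
  have lt: "s i < s j" if "1 \<le> i" "i < j" "j \<le> int m" for i j
  proof -
    have "\<not> s i > s j" using assms(2) that unfolding Inv_def by blast
    moreover have "s i \<noteq> s j" using F(3)[of i j] that by auto
    ultimately show ?thesis by auto
  qed
  have gr: "s (i + int d) \<ge> s i + int d" if "1 \<le> i" "i + int d \<le> int m" for i d
    using that
  proof (induction d)
    case 0 then show ?case by simp
  next
    case (Suc d)
    have "s (i + int d) < s (i + int d + 1)" using lt[of "i + int d" "i + int d + 1"] Suc.prems by simp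
    moreover have "s (i + int d) \<ge> s i + int d" using Suc by simp
    moreover have e: "i + int (Suc d) = i + int d + 1" "int (Suc d) = int d + 1" by simp_all
    ultimately show ?case by (simp only: e)
  qed
  have pos: "s i = i" if "i \<in> {1..int m}" for i
  proof -
    have "s (1 + int (nat (i - 1))) \<ge> s 1 + int (nat (i - 1))" using gr[of 1 "nat (i-1)"] that by simp
    moreover have "s 1 \<ge> 1" using F(1)[of 1] that by auto
    moreover have "s (i + int (nat (int m - i))) \<ge> s i + int (nat (int m - i))" using gr[of i "nat (int m - i)"] that by simp
    moreover have "s (int m) \<le> int m" using F(1)[of "int m"] that by auto
    ultimately show ?thesis using that by simp
  qed
  show ?thesis
  proof
    fix i
    show "s i = id i"
    proof (cases "i \<in> {1..int m}")
      case True then show ?thesis using pos by simp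
    next
      case False
      show ?thesis
      proof (cases "-i \<in> {1..int m}")
        case True
        then show ?thesis using pos[of "-i"] F(4)[of "-i"] by simp
      next
        case False
        then show ?thesis using \<open>i \<notin> {1..int m}\<close> F(5) by auto
      qed
    qed
  qed
qed

lemma Qp_descent:
  assumes "Qp m s" "Inv m s \<noteq> {}"
  shows "\<exists>q p. 1 \<le> q \<and> q < p \<and> p \<le> int m \<and> s q = s p + 1"
proof -
  note F = Qp_facts[OF assms(1)]
  obtain x where "x \<in> Inv m s" using assms by blast
  then obtain x where x: "x \<in> Inv m s" and mn: "\<forall>y. y \<in> Inv m s \<longrightarrow> nat (s (fst x) - s (snd x)) \<le> nat (s (fst y) - s (snd y))"
    using ex_has_least_nat[of "\<lambda>x. x \<in> Inv m s" x "\<lambda>x. nat (s (fst x) - s (snd x))"] by blast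
  obtain i j where ij: "x = (i,j)" by force
  have ij2: "1 \<le> i" "i < j" "j \<le> int m" "s i > s j" using x ij by (auto simp: Inv_def)
  have sj: "s j \<in> {1..int m}" "s i \<in> {1..int m}" using F(1) ij2 by auto
  have "s i = s j + 1"
  proof (rule ccontr)
    assume "s i \<noteq> s j + 1"
    then have big: "s i > s j + 1" using ij2 by simp
    then have "s j + 1 \<in> {1..int m}" using sj by auto
    then obtain l where l: "l \<in> {1..int m}" "s l = s j + 1" using F(2) by blast
    show False
    proof (cases "l < j")
      case True
      then have "(l,j) \<in> Inv m s" using l ij2 by (auto simp: Inv_def)
      then have "nat (s i - s j) \<le> nat (s l - s j)" using mn ij by (metis fst_conv snd_conv)
      then show False using big l by simp
    next
      case False
      then have "l > j" using l by (metis add.commute add_cancel_right_right linorder_neqE_linordered_idom not_one_le_zero zero_le_one)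
      then have "(i,l) \<in> Inv m s" using l ij2 big by (auto simp: Inv_def)
      then have "nat (s i - s j) \<le> nat (s i - s l)" using mn ij by (metis fst_conv snd_conv)
      then show False using big l by simp
    qed
  qed
  then show ?thesis using ij2 by blast
qed

lemma Inv_swap:
  assumes "Qp m s" "1 \<le> k" "1 \<le> q" "q < p" "p \<le> int m" "s q = int k + 1" "s p = int k"
  shows "Inv m s = insert (q,p) (Inv m (cox_gen k \<circ> s))" "(q,p) \<notin> Inv m (cox_gen k \<circ> s)"
proof -
  note F = Qp_facts[OF assms(1)]
  have c1: "cox_gen k (int k) = int k + 1" "cox_gen k (int k + 1) = int k" unfolding cox_gen_def using assms(2) by auto
  show "(q,p) \<notin> Inv m (cox_gen k \<circ> s)" using assms c1 by (auto simp: Inv_def)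
  have eq: "(i,j) \<in> Inv m s \<longleftrightarrow> (i,j) \<in> Inv m (cox_gen k \<circ> s)" if ne: "(i,j) \<noteq> (q,p)" for i j
  proof (cases "1 \<le> i \<and> i < j \<and> j \<le> int m")
    case True
    have pi: "s i > 0" "s j > 0" using F(1)[of i] F(1)[of j] True by auto
    have n1: "\<not> (s i = int k \<and> s j = int k + 1)"
    proof
      assume "s i = int k \<and> s j = int k + 1"
      then have "i = p" "j = q" using F(3)[of i p] F(3)[of j q] True assms by auto
      then show False using True assms by simp
    qed
    have n2: "\<not> (s i = int k + 1 \<and> s j = int k)"
    proof
      assume "s i = int k + 1 \<and> s j = int k"
      then have "i = q" "j = p" using F(3)[of i q] F(3)[of j p] True assms by auto
      then show False using ne by simp
    qed
    show ?thesis using cg_order_pos[OF assms(2) pi n1 n2] True by (auto simp: Inv_def)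
  next
    case False then show ?thesis by (auto simp: Inv_def)
  qed
  have "(q,p) \<in> Inv m s" using assms by (auto simp: Inv_def)
  then show "Inv m s = insert (q,p) (Inv m (cox_gen k \<circ> s))"
  proof (intro set_eqI)
    fix x :: "int \<times> int"
    obtain i j where x: "x = (i,j)" by force
    show "x \<in> Inv m s \<longleftrightarrow> x \<in> insert (q,p) (Inv m (cox_gen k \<circ> s))"
    proof (cases "(i,j) = (q,p)")
      case True then show ?thesis using x \<open>(q,p) \<in> Inv m s\<close> by simp
    next
      case False then show ?thesis using x eq[OF False] by auto
    qed
  qed
qed

lemma Inv_swap_card:
  assumes "Qp m s" "1 \<le> k" "1 \<le> q" "q < p" "p \<le> int m" "s q = int k + 1" "s p = int k"
  shows "card (Inv m s) = card (Inv m (cox_gen k \<circ> s)) + 1"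
proof -
  have fin: "finite (Inv m (cox_gen k \<circ> s))" by (rule Inv_fin)
  have a: "card (insert (q,p) (Inv m (cox_gen k \<circ> s))) = Suc (card (Inv m (cox_gen k \<circ> s)))"
    by (rule card_insert_disjoint[OF fin Inv_swap(2)[OF assms]])
  have b: "card (Inv m s) = card (insert (q,p) (Inv m (cox_gen k \<circ> s)))"
    by (rule arg_cong[of _ _ card, OF Inv_swap(1)[OF assms]])
  show ?thesis using a b by linarith
qed

lemma upper_word:
  "Qp m s \<Longrightarrow> \<exists>ws. length ws = card (Inv m s) \<and> set ws \<subseteq> {0..<m} \<and> wprod ws = s"
proof (induction "card (Inv m s)" arbitrary: s rule: less_induct)
  case less
  show ?case
  proof (cases "Inv m s = {}")
    case True
    then have "s = id" using Qp_id less.prems by blast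
    then show ?thesis using True by (intro exI[of _ "[]"]) simp
  next
    case False
    obtain q p where qp: "1 \<le> q" "q < p" "p \<le> int m" "s q = s p + 1" using Qp_descent[OF less.prems False] by blast
    note F = Qp_facts[OF less.prems]
    have sp: "1 \<le> s p" "s q \<le> int m" using F(1)[of p] F(1)[of q] qp by auto
    define k where "k = nat (s p)"
    have k: "1 \<le> k" "k < m" "s p = int k" "s q = int k + 1" using sp qp unfolding k_def by auto
    have Q2: "Qp m (cox_gen k \<circ> s)" using Qp_comp less.prems k by blast
    have cc: "card (Inv m s) = card (Inv m (cox_gen k \<circ> s)) + 1"
      using Inv_swap_card[OF less.prems k(1) qp(1,2,3) k(4) k(3)] .
    obtain ws where ws: "length ws = card (Inv m (cox_gen k \<circ> s))" "set ws \<subseteq> {0..<m}" "wprod ws = cox_gen k \<circ> s"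
      using less.hyps[OF _ Q2] cc by auto
    have "wprod (k # ws) = s" using ws(3) cg_comp_invol[of k s] by simp
    then show ?thesis using ws cc k by (intro exI[of _ "k # ws"]) auto
  qed
qed

lemma length_B_eq:
  assumes "Qp m s"
  shows "length_B m s = card (Inv m s)"
  unfolding length_B_def
proof (rule Least_equality)
  show "\<exists>ws. length ws = card (Inv m s) \<and> set ws \<subseteq> {0..<m} \<and> wprod ws = s"
    using upper_word[OF assms] .
next
  fix y assume "\<exists>ws. length ws = y \<and> set ws \<subseteq> {0..<m} \<and> wprod ws = s"
  then obtain ws where "length ws = y" "wprod ws = s" by blast
  then show "card (Inv m s) \<le> y" using lower_word[of ws m] by simp
qed

lemma del_swap:
  assumes "Qp m s" "1 \<le> q" "q < p" "p \<le> int m" "s q = 2" "s p = 1"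
  shows "del_B m s = del_B m (cox_gen 1 \<circ> s) + 1"
proof -
  note F = Qp_facts[OF assms(1)]
  let ?t = "cox_gen 1 \<circ> s"
  define D where "D f = {j \<in> {2..int m}. \<forall>i\<in>{1..<j}. f i > f j}" for f :: "int \<Rightarrow> int"
  have c1: "cox_gen 1 1 = 2" "cox_gen 1 2 = 1" unfolding cox_gen_def by auto
  have fin: "finite (D f)" for f unfolding D_def by (rule finite_subset[of _ "{2..int m}"]) auto
  have pin: "p \<in> D s"
  proof -
    have "s i > 1" if "i \<in> {1..<p}" for i
    proof -
      have "s i \<ge> 1" using F(1)[of i] that assms by auto
      moreover have "s i \<noteq> 1" using F(3)[of i p] that assms by auto
      ultimately show ?thesis by simp
    qed
    then show ?thesis using assms unfolding D_def by auto
  qed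
  have pout: "p \<notin> D ?t"
  proof
    assume "p \<in> D ?t"
    then have "\<forall>i\<in>{1..<p}. ?t i > ?t p" unfolding D_def by blast
    moreover have "q \<in> {1..<p}" using assms by auto
    ultimately have "?t q > ?t p" by blast
    then show False using assms c1 by simp
  qed
  have eq: "j \<in> D s \<longleftrightarrow> j \<in> D ?t" if "j \<noteq> p" for j
  proof -
    have "s i > s j \<longleftrightarrow> ?t i > ?t j" if ij: "i \<in> {1..<j}" "j \<in> {2..int m}" for i
    proof -
      have pi: "s i > 0" "s j > 0" using F(1)[of i] F(1)[of j] ij by auto
      have n1: "\<not> (s i = int 1 \<and> s j = int 1 + 1)"
      proof
        assume "s i = int 1 \<and> s j = int 1 + 1"
        then have "i = p" "j = q" using F(3)[of i p] F(3)[of j q] ij assms by auto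
        then show False using ij assms by simp
      qed
      have n2: "\<not> (s i = int 1 + 1 \<and> s j = int 1)"
      proof
        assume "s i = int 1 + 1 \<and> s j = int 1"
        then have "j = p" using F(3)[of j p] ij assms by auto
        then show False using \<open>j \<noteq> p\<close> by simp
      qed
      show ?thesis using cg_order_pos[of 1, OF _ pi n1 n2] by simp
    qed
    then show ?thesis unfolding D_def by auto
  qed
  have "D s = insert p (D ?t)"
  proof (intro set_eqI)
    fix j
    show "j \<in> D s \<longleftrightarrow> j \<in> insert p (D ?t)"
      using pin eq[of j] by (cases "j = p") auto
  qed
  then have "card (D s) = card (D ?t) + 1" using fin pout by simp
  then show ?thesis unfolding del_B_def D_def by simp
qed

theorem lemma3p4:
  fixes n :: nat and \<rho> :: "int \<Rightarrow> int"
  assumes "n \<ge> 1" and "\<rho> \<in> unsigned_perms (n + 1)"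
  shows "length_L (n + 1) \<rho> = length_L (n + 1) (cox_gen 1 \<circ> \<rho>)"
proof -
  let ?m = "n + 1"
  have Q: "Qp ?m \<rho>" using unsigned_Qp assms(2) by blast
  have Q1: "Qp ?m (cox_gen 1 \<circ> \<rho>)" using Qp_comp[OF Q] assms(1) by simp
  note F = Qp_facts[OF Q]
  obtain p where p: "p \<in> {1..int ?m}" "\<rho> p = 1" using F(2)[of 1] by auto
  obtain q where q: "q \<in> {1..int ?m}" "\<rho> q = 2" using F(2)[of 2] assms(1) by auto
  have c1: "cox_gen 1 1 = 2" "cox_gen 1 2 = 1" unfolding cox_gen_def by auto
  have "p \<noteq> q" using p q by auto
  then consider "q < p" | "p < q" by linarith
  then show ?thesis
  proof cases
    case 1
    have a: "card (Inv ?m \<rho>) = card (Inv ?m (cox_gen 1 \<circ> \<rho>)) + 1"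
      using Inv_swap_card[OF Q, of 1 q p] p q 1 by simp
    have b: "del_B ?m \<rho> = del_B ?m (cox_gen 1 \<circ> \<rho>) + 1"
      using del_swap[OF Q, of q p] p q 1 by simp
    show ?thesis unfolding length_L_def length_B_eq[OF Q] length_B_eq[OF Q1] using a b by simp
  next
    case 2
    let ?s = "cox_gen 1 \<circ> \<rho>"
    have e: "cox_gen 1 \<circ> ?s = \<rho>" by (rule cg_comp_invol)
    have a: "card (Inv ?m ?s) = card (Inv ?m \<rho>) + 1"
      using Inv_swap_card[OF Q1, of 1 p q] p q 2 c1 e by simp
    have b: "del_B ?m ?s = del_B ?m \<rho> + 1"
      using del_swap[OF Q1, of p q] p q 2 c1 e by simp
    show ?thesis unfolding length_L_def length_B_eq[OF Q] length_B_eq[OF Q1] using a b by simp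
  qed
qed

end
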